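(* Let $(X,\mathsf{d}_X)$ be a compact metric space and $\mathfrak{A}=\bigoplus_{k=0}^n M_{m_k}(\mathbb{C})$ ($n\in\mathbb{N}$, $m_k\ge1$). Let $\|\cdot\|_{\mathsf{n}}$ be a norm on $\mathfrak{A}$ (over $\mathbb{R}$ or $\mathbb{C}$) with $M,N>0$ such that $M\|\cdot\|_{\mathsf{n}}\le\|\cdot\|_{\mathfrak{A}}\le N\|\cdot\|_{\mathsf{n}}$. Let $v=(v_0,\dots,v_n)$ with $v_k\in[0,1]$, $\sum_kv_k=1$, and let $\mathsf{tr}^{\mathfrak{A}}_v$ be the state $(a^k)_k\mapsto\sum_{k=0}^n\frac{v_k}{m_k}\mathrm{Tr}(a^k)$. Then $\Delta:=\Delta^{\mathfrak{A}}_{\mathsf{tr}^{\mathfrak{A}}_v}:(X,\mathsf{d}_X)\to(\mathscr{S}(C(X,\mathfrak{A})),\mathrm{mk}_{\mathsf{L}^{(\mathsf{n}),q}_{\mathsf{d}_X}})$ is bi-Lipschitz; specifically, for all $x,y\in X$, writing $D=\mathrm{diam}(X,\mathsf{d}_X)$ and $m_q(x,y)=\mathrm{mk}_{\mathsf{L}^{(\mathsf{n}),q}_{\mathsf{d}_X}}(\Delta(x),\Delta(y))$: (1) if $q=C(X)$: $M\mathsf{d}_X(x,y)\le m_q(x,y)\le N\mathsf{d}_X(x,y)$; (2) if $q=\mathbb{C}$: (a) if $MD\le1$, $M\mathsf{d}_X(x,y)\le m_q(x,y)\le N\mathsf{d}_X(x,y)$; (b) if $MD>1$, $\frac1D\mathsf{d}_X(x,y)\le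 m_q(x,y)\le N\mathsf{d}_X(x,y)$; (3) if $q=\mu$ for a state $\mu$ of $C(X,\mathfrak{A})$: (a) if $2MD\le1$, $M\mathsf{d}_X(x,y)\le m_q(x,y)\le N\mathsf{d}_X(x,y)$; (b) if $2MD>1$, $\frac1{2D}\mathsf{d}_X(x,y)\le m_q(x,y)\le N\mathsf{d}_X(x,y)$.
   Context: For a state $\phi$ of $\mathfrak{A}$, $\Delta^{\mathfrak{A}}_\phi(x)$ is the state $a\mapsto\phi(a(x))$ of $C(X,\mathfrak{A})$ (continuous $\mathfrak{A}$-valued functions, supremum norm). $C(X,\mathbb{C}1_{\mathfrak{A}})$: $\mathbb{C}1_{\mathfrak{A}}$-valued functions. $l^{(\mathsf{n})}_{\mathsf{d}_X}(a)=\sup_{x\ne y}\|a(x)-a(y)\|_{\mathsf{n}}/\mathsf{d}_X(x,y)$; $\mathsf{L}^{(\mathsf{n}),C(X)}_{\mathsf{d}_X}(a)=\max\{l^{(\mathsf{n})}_{\mathsf{d}_X}(a),\inf_{b\in C(X,\mathbb{C}1_{\mathfrak{A}})}\|a-b\|\}$, $\mathsf{L}^{(\mathsf{n}),\mathbb{C}}_{\mathsf{d}_X}(a)=\max\{l^{(\mathsf{n})}_{\mathsf{d}_X}(a),\inf_{\lambda\in\mathbb{C}}\|a-\lambda1\|\}$, $\mathsf{L}^{(\mathsf{n}),\mu}_{\mathsf{d}_X}(a)=\max\{l^{(\mathsf{n})}_{\mathsf{d}_X}(a),\|a-\mu(a)1\|\}$. $\mathrm{mk}_{\mathsf{L}}(\varphi,\psi)=\sup\{|\varphi(a)-\psi(a)|:a=a^*,\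 \mathsf{L}(a)\le1\}$. $\mathrm{diam}(X,\mathsf{d}_X)=\sup_{x,y}\mathsf{d}_X(x,y)$. *)

theory Defs
  imports "HOL-Analysis.Analysis" "HOL-Library.Extended_Real"
begin

text \<open>Elements of the finite-dimensional C*-algebra
  A = M_{m 0}(C) (+) ... (+) M_{m n}(C) are encoded as functions
  a k i j (block k, row i, column j), vanishing outside the blocks.\<close>

type_synonym blk = "nat \<Rightarrow> nat \<Rightarrow> nat \<Rightarrow> complex"

definition in_alg :: "nat \<Rightarrow> (nat \<Rightarrow> nat) \<Rightarrow> blk \<Rightarrow> bool" where
  "in_alg n m a \<longleftrightarrow> (\<forall>k i j. (n < k \<or> m k \<le> i \<or> m k \<le> j) \<longrightarrow> a k i j = 0)"

definition alg_add :: "blk \<Rightarrow> blk \<Rightarrow> blk" where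
  "alg_add a b = (\<lambda>k i j. a k i j + b k i j)"

definition alg_diff :: "blk \<Rightarrow> blk \<Rightarrow> blk" where
  "alg_diff a b = (\<lambda>k i j. a k i j - b k i j)"

definition alg_scale :: "complex \<Rightarrow> blk \<Rightarrow> blk" where
  "alg_scale c a = (\<lambda>k i j. c * a k i j)"

definition alg_mult :: "nat \<Rightarrow> (nat \<Rightarrow> nat) \<Rightarrow> blk \<Rightarrow> blk \<Rightarrow> blk" where
  "alg_mult n m a b = (\<lambda>k i j. if k \<le> n \<and> i < m k \<and> j < m k
      then (\<Sum>l<m k. a k i l * b k l j) else 0)"

definition alg_adj :: "blk \<Rightarrow> blk" where
  "alg_adj a = (\<lambda>k i j. cnj (a k j i))"

definition alg_one :: "nat \<Rightarrow> (nat \<Rightarrow> nat) \<Rightarrow> blk" where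
  "alg_one n m = (\<lambda>k i j. if k \<le> n \<and> i < m k \<and> i = j then 1 else 0)"

definition blk_opnorm :: "(nat \<Rightarrow> nat) \<Rightarrow> nat \<Rightarrow> blk \<Rightarrow> real" where
  "blk_opnorm m k a = (SUP v \<in> {v :: nat \<Rightarrow> complex. (\<Sum>i<m k. (cmod (v i))\<^sup>2) = 1}.
      sqrt (\<Sum>i<m k. (cmod (\<Sum>j<m k. a k i j * v j))\<^sup>2))"

definition cstar_norm :: "nat \<Rightarrow> (nat \<Rightarrow> nat) \<Rightarrow> blk \<Rightarrow> real" where
  "cstar_norm n m a = Max ((\<lambda>k. blk_opnorm m k a) ` {..n})"

definition blk_trace :: "(nat \<Rightarrow> nat) \<Rightarrow> nat \<Rightarrow> blk \<Rightarrow> complex" where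
  "blk_trace m k a = (\<Sum>i<m k. a k i i)"

definition tr_v :: "nat \<Rightarrow> (nat \<Rightarrow> nat) \<Rightarrow> (nat \<Rightarrow> real) \<Rightarrow> blk \<Rightarrow> complex" where
  "tr_v n m v a = (\<Sum>k\<le>n. complex_of_real (v k / real (m k)) * blk_trace m k a)"

text \<open>A norm on A as a real vector space (a complex norm is in particular one).\<close>
definition is_alg_norm :: "nat \<Rightarrow> (nat \<Rightarrow> nat) \<Rightarrow> (blk \<Rightarrow> real) \<Rightarrow> bool" where
  "is_alg_norm n m nrm \<longleftrightarrow>
     (\<forall>a. in_alg n m a \<longrightarrow> nrm a \<ge> 0) \<and>
     (\<forall>a. in_alg n m a \<longrightarrow> nrm a = 0 \<longrightarrow> a = (\<lambda>k i j. 0)) \<and>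
     (\<forall>a b. in_alg n m a \<longrightarrow> in_alg n m b \<longrightarrow> nrm (alg_add a b) \<le> nrm a + nrm b) \<and>
     (\<forall>a (r::real). in_alg n m a \<longrightarrow> nrm (alg_scale (complex_of_real r) a) = \<bar>r\<bar> * nrm a)"

text \<open>C(X,A): norm-continuous A-valued functions on the compact metric space X
  (X is the whole type 'x).\<close>
definition CXA :: "nat \<Rightarrow> (nat \<Rightarrow> nat) \<Rightarrow> ('x::metric_space \<Rightarrow> blk) set" where
  "CXA n m = {a. (\<forall>x. in_alg n m (a x)) \<and>
     (\<forall>x. \<forall>\<epsilon>>0. \<exists>\<delta>>0. \<forall>y. dist y x < \<delta> \<longrightarrow> cstar_norm n m (alg_diff (a y) (a x)) < \<epsilon>)}"

definition sup_norm :: "nat \<Rightarrow> (nat \<Rightarrow> nat) \<Rightarrow> ('x \<Rightarrow> blk) \<Rightarrow> real" where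
  "sup_norm n m a = (SUP x. cstar_norm n m (a x))"

definition fun_diff :: "('x \<Rightarrow> blk) \<Rightarrow> ('x \<Rightarrow> blk) \<Rightarrow> ('x \<Rightarrow> blk)" where
  "fun_diff a b = (\<lambda>x. alg_diff (a x) (b x))"

definition fun_one :: "nat \<Rightarrow> (nat \<Rightarrow> nat) \<Rightarrow> ('x \<Rightarrow> blk)" where
  "fun_one n m = (\<lambda>x. alg_one n m)"

definition fun_adj :: "('x \<Rightarrow> blk) \<Rightarrow> ('x \<Rightarrow> blk)" where
  "fun_adj a = (\<lambda>x. alg_adj (a x))"

definition CX_scalar :: "nat \<Rightarrow> (nat \<Rightarrow> nat) \<Rightarrow> ('x::metric_space \<Rightarrow> blk) set" where
  "CX_scalar n m = {(\<lambda>x. alg_scale (c x) (alg_one n m)) | c :: 'x \<Rightarrow> complex. continuous_on UNIV c}"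

definition is_state :: "nat \<Rightarrow> (nat \<Rightarrow> nat) \<Rightarrow> (('x::metric_space \<Rightarrow> blk) \<Rightarrow> complex) \<Rightarrow> bool" where
  "is_state n m \<phi> \<longleftrightarrow>
     (\<forall>a\<in>CXA n m. \<forall>b\<in>CXA n m. \<phi> (\<lambda>x. alg_add (a x) (b x)) = \<phi> a + \<phi> b) \<and>
     (\<forall>a\<in>CXA n m. \<forall>c. \<phi> (\<lambda>x. alg_scale c (a x)) = c * \<phi> a) \<and>
     (\<forall>b\<in>CXA n m. Im (\<phi> (\<lambda>x. alg_mult n m (alg_adj (b x)) (b x))) = 0 \<and>
                  Re (\<phi> (\<lambda>x. alg_mult n m (alg_adj (b x)) (b x))) \<ge> 0) \<and>
     \<phi> (fun_one n m) = 1"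

definition Delta :: "(blk \<Rightarrow> complex) \<Rightarrow> 'x \<Rightarrow> ('x \<Rightarrow> blk) \<Rightarrow> complex" where
  "Delta \<phi> x = (\<lambda>a. \<phi> (a x))"

definition lip :: "(blk \<Rightarrow> real) \<Rightarrow> ('x::metric_space \<Rightarrow> blk) \<Rightarrow> ereal" where
  "lip nrm a = (SUP p \<in> {p :: 'x \<times> 'x. fst p \<noteq> snd p}.
       ereal (nrm (alg_diff (a (fst p)) (a (snd p))) / dist (fst p) (snd p)))"

definition L_CX :: "nat \<Rightarrow> (nat \<Rightarrow> nat) \<Rightarrow> (blk \<Rightarrow> real) \<Rightarrow> ('x::metric_space \<Rightarrow> blk) \<Rightarrow> ereal" where
  "L_CX n m nrm a = max (lip nrm a)
      (ereal (Inf {sup_norm n m (fun_diff a b) | b. b \<in> CX_scalar n m}))"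

definition L_C :: "nat \<Rightarrow> (nat \<Rightarrow> nat) \<Rightarrow> (blk \<Rightarrow> real) \<Rightarrow> ('x::metric_space \<Rightarrow> blk) \<Rightarrow> ereal" where
  "L_C n m nrm a = max (lip nrm a)
      (ereal (Inf {sup_norm n m (fun_diff a (\<lambda>x. alg_scale c (alg_one n m))) | c. True}))"

definition L_mu :: "nat \<Rightarrow> (nat \<Rightarrow> nat) \<Rightarrow> (blk \<Rightarrow> real) \<Rightarrow> (('x::metric_space \<Rightarrow> blk) \<Rightarrow> complex)
    \<Rightarrow> ('x \<Rightarrow> blk) \<Rightarrow> ereal" where
  "L_mu n m nrm \<mu> a = max (lip nrm a)
      (ereal (sup_norm n m (fun_diff a (\<lambda>x. alg_scale (\<mu> a) (alg_one n m)))))"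

definition mk :: "nat \<Rightarrow> (nat \<Rightarrow> nat) \<Rightarrow> (('x::metric_space \<Rightarrow> blk) \<Rightarrow> ereal)
    \<Rightarrow> (('x \<Rightarrow> blk) \<Rightarrow> complex) \<Rightarrow> (('x \<Rightarrow> blk) \<Rightarrow> complex) \<Rightarrow> ereal" where
  "mk n m L \<phi> \<psi> = (SUP a \<in> {a \<in> CXA n m. fun_adj a = a \<and> L a \<le> 1}.
       ereal (cmod (\<phi> a - \<psi> a)))"

end

theory Submission imports Defs begin

lemma opnorm_bdd:
  "bdd_above ((\<lambda>v. sqrt (\<Sum>i<m k. (cmod (\<Sum>j<m k. a k i j * v j))\<^sup>2)) `
      {v :: nat \<Rightarrow> complex. (\<Sum>i<m k. (cmod (v i))\<^sup>2) = 1})"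
proof (rule bdd_aboveI2)
  fix v :: "nat \<Rightarrow> complex" assume "v \<in> {v. (\<Sum>i<m k. (cmod (v i))\<^sup>2) = 1}"
  hence s: "(\<Sum>i<m k. (cmod (v i))\<^sup>2) = 1" by simp
  have vb: "cmod (v j) \<le> 1" if "j < m k" for j
  proof -
    have "(cmod (v j))\<^sup>2 \<le> (\<Sum>i<m k. (cmod (v i))\<^sup>2)"
      by (rule member_le_sum) (use that in auto)
    hence "(cmod (v j))\<^sup>2 \<le> 1\<^sup>2" using s by simp
    thus ?thesis by (rule power2_le_imp_le) simp
  qed
  have "cmod (\<Sum>j<m k. a k i j * v j) \<le> (\<Sum>j<m k. cmod (a k i j))" for i
  proof -
    have "cmod (\<Sum>j<m k. a k i j * v j) \<le> (\<Sum>j<m k. cmod (a k i j * v j))"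
      by (rule norm_sum)
    also have "\<dots> \<le> (\<Sum>j<m k. cmod (a k i j))"
      by (rule sum_mono) (use vb in \<open>auto simp: norm_mult intro: mult_left_le\<close>)
    finally show ?thesis .
  qed
  hence "(cmod (\<Sum>j<m k. a k i j * v j))\<^sup>2 \<le> (\<Sum>j<m k. cmod (a k i j))\<^sup>2" for i
    by (intro power_mono) auto
  hence "(\<Sum>i<m k. (cmod (\<Sum>j<m k. a k i j * v j))\<^sup>2) \<le> (\<Sum>i<m k. (\<Sum>j<m k. cmod (a k i j))\<^sup>2)"
    by (intro sum_mono) auto
  thus "sqrt (\<Sum>i<m k. (cmod (\<Sum>j<m k. a k i j * v j))\<^sup>2) \<le> sqrt (\<Sum>i<m k. (\<Sum>j<m k. cmod (a k i j))\<^sup>2)"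
    by simp
qed

definition ev :: "nat \<Rightarrow> nat \<Rightarrow> complex" where "ev i = (\<lambda>j. if j = i then 1 else 0)"

lemma ev_in: "i < m k \<Longrightarrow> ev i \<in> {v :: nat \<Rightarrow> complex. (\<Sum>i<m k. (cmod (v i))\<^sup>2) = 1}"
proof -
  assume "i < m k"
  have "(\<Sum>j<m k. (cmod (ev i j))\<^sup>2) = (\<Sum>j<m k. if j = i then 1 else 0)"
    by (rule sum.cong) (auto simp: ev_def)
  thus ?thesis using \<open>i < m k\<close> by simp
qed

lemma diag_le:
  assumes "i < m k" shows "cmod (a k i i) \<le> blk_opnorm m k a"
  unfolding blk_opnorm_def
proof (rule cSUP_upper2[OF opnorm_bdd[where m=m and k=k and a=a] ev_in[of i m k, OF assms]])
  have e: "(\<Sum>j<m k. a k i' j * ev i j) = a k i' i" for i'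
  proof -
    have "(\<Sum>j<m k. a k i' j * ev i j) = (\<Sum>j<m k. if j = i then a k i' i else 0)"
      by (rule sum.cong) (auto simp: ev_def)
    thus ?thesis using assms by simp
  qed
  have "(cmod (a k i i))\<^sup>2 \<le> (\<Sum>i'<m k. (cmod (a k i' i))\<^sup>2)"
    by (rule member_le_sum) (use assms in auto)
  hence "sqrt ((cmod (a k i i))\<^sup>2) \<le> sqrt (\<Sum>i'<m k. (cmod (a k i' i))\<^sup>2)"
    by (rule real_sqrt_le_mono)
  hence "cmod (a k i i) \<le> sqrt (\<Sum>i'<m k. (cmod (a k i' i))\<^sup>2)" by simp
  thus "cmod (a k i i) \<le> sqrt (\<Sum>i'<m k. (cmod (\<Sum>j<m k. a k i' j * ev i j))\<^sup>2)"
    by (simp add: e)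
qed

lemma opnorm_nonneg: assumes "1 \<le> m k" shows "0 \<le> blk_opnorm m k a"
  using diag_le[of 0 m k a] assms by (meson dual_order.trans norm_ge_zero less_le_trans zero_less_one le_less_trans linorder_not_le)

lemma opnorm_le_cstar: "k \<le> n \<Longrightarrow> blk_opnorm m k a \<le> cstar_norm n m a"
  unfolding cstar_norm_def by (rule Max_ge) auto

lemma opnorm_scale_one:
  assumes "1 \<le> m k" "k \<le> n"
  shows "blk_opnorm m k (alg_scale c (alg_one n m)) = cmod c"
proof -
  let ?S = "{v :: nat \<Rightarrow> complex. (\<Sum>i<m k. (cmod (v i))\<^sup>2) = 1}"
  have "sqrt (\<Sum>i<m k. (cmod (\<Sum>j<m k. alg_scale c (alg_one n m) k i j * v j))\<^sup>2) = cmod c"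
    if "v \<in> ?S" for v
  proof -
    have e: "(\<Sum>j<m k. alg_scale c (alg_one n m) k i j * v j) = c * v i" if "i < m k" for i
    proof -
      have "(\<Sum>j<m k. alg_scale c (alg_one n m) k i j * v j) = (\<Sum>j<m k. if j = i then c * v i else 0)"
        by (rule sum.cong) (use that assms in \<open>auto simp: alg_scale_def alg_one_def\<close>)
      thus ?thesis using that by simp
    qed
    have "(\<Sum>i<m k. (cmod (\<Sum>j<m k. alg_scale c (alg_one n m) k i j * v j))\<^sup>2)
        = (\<Sum>i<m k. (cmod c)\<^sup>2 * (cmod (v i))\<^sup>2)"
      by (rule sum.cong) (auto simp: e norm_mult power_mult_distrib)
    also have "\<dots> = (cmod c)\<^sup>2" using that by (simp add: sum_distrib_left[symmetric])
    finally show ?thesis by simp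
  qed
  hence "blk_opnorm m k (alg_scale c (alg_one n m)) = (SUP v\<in>?S. cmod c)"
    unfolding blk_opnorm_def by (intro SUP_cong) auto
  also have "\<dots> = cmod c" using ev_in[of 0 m k] assms by (intro cSUP_const) auto
  finally show ?thesis .
qed

lemma cstar_scale_one:
  assumes "\<forall>k\<le>n. 1 \<le> m k"
  shows "cstar_norm n m (alg_scale c (alg_one n m)) = cmod c"
proof -
  have "(\<lambda>k. blk_opnorm m k (alg_scale c (alg_one n m))) ` {..n} = {cmod c}"
    using opnorm_scale_one assms by force
  thus ?thesis unfolding cstar_norm_def by simp
qed

lemma diff_scale: "alg_diff (alg_scale c a) (alg_scale d a) = alg_scale (c - d) a"
  by (simp add: alg_diff_def alg_scale_def algebra_simps)

lemma adj_scale_one: "alg_adj (alg_scale (complex_of_real r) (alg_one n m)) = alg_scale (complex_of_real r) (alg_one n m)"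
  by (auto simp: alg_adj_def alg_scale_def alg_one_def fun_eq_iff)

lemma mult_scale_one: "alg_mult n m (alg_scale c (alg_one n m)) (alg_scale d (alg_one n m)) = alg_scale (c * d) (alg_one n m)"
proof -
  have "(\<Sum>l<m k. alg_scale c (alg_one n m) k i l * alg_scale d (alg_one n m) k l j)
     = (if i = j then c * d else 0)" if "k \<le> n" "i < m k" "j < m k" for k i j
  proof -
    have "(\<Sum>l<m k. alg_scale c (alg_one n m) k i l * alg_scale d (alg_one n m) k l j)
       = (\<Sum>l<m k. if l = i then (if i = j then c * d else 0) else 0)"
      by (rule sum.cong) (use that in \<open>auto simp: alg_scale_def alg_one_def\<close>)
    thus ?thesis using that by simp
  qed
  thus ?thesis by (auto simp: alg_mult_def alg_scale_def alg_one_def fun_eq_iff)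
qed

lemma in_alg_scale_one: "in_alg n m (alg_scale c (alg_one n m))"
  by (auto simp: in_alg_def alg_scale_def alg_one_def)

lemma tr_scale_one:
  assumes "\<forall>k\<le>n. 1 \<le> m k" "(\<Sum>k\<le>n. v k) = 1"
  shows "tr_v n m v (alg_scale c (alg_one n m)) = c"
proof -
  have "blk_trace m k (alg_scale c (alg_one n m)) = of_nat (m k) * c" if "k \<le> n" for k
    using that by (simp add: blk_trace_def alg_scale_def alg_one_def)
  hence "tr_v n m v (alg_scale c (alg_one n m)) = (\<Sum>k\<le>n. complex_of_real (v k) * c)"
    unfolding tr_v_def using assms(1)
    by (intro sum.cong) (auto simp: of_real_divide field_simps)
  also have "\<dots> = complex_of_real (\<Sum>k\<le>n. v k) * c" by (simp add: sum_distrib_right)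
  finally show ?thesis using assms(2) by simp
qed

lemma tr_diff: "tr_v n m v (alg_diff a b) = tr_v n m v a - tr_v n m v b"
  unfolding tr_v_def blk_trace_def alg_diff_def
  by (simp add: sum_subtractf right_diff_distrib)

lemma tr_bound:
  assumes "\<forall>k\<le>n. 1 \<le> m k" "\<forall>k\<le>n. 0 \<le> v k" "(\<Sum>k\<le>n. v k) = 1"
  shows "cmod (tr_v n m v b) \<le> cstar_norm n m b"
proof -
  have t: "cmod (blk_trace m k b) \<le> real (m k) * cstar_norm n m b" if "k \<le> n" for k
  proof -
    have "cmod (blk_trace m k b) \<le> (\<Sum>i<m k. cmod (b k i i))"
      unfolding blk_trace_def by (rule norm_sum)
    also have "\<dots> \<le> (\<Sum>i<m k. cstar_norm n m b)"
      by (rule sum_mono) (meson diag_le opnorm_le_cstar that order_trans lessThan_iff)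
    finally show ?thesis by simp
  qed
  have "cmod (tr_v n m v b) \<le> (\<Sum>k\<le>n. cmod (complex_of_real (v k / real (m k)) * blk_trace m k b))"
    unfolding tr_v_def by (rule norm_sum)
  also have "\<dots> \<le> (\<Sum>k\<le>n. v k * cstar_norm n m b)"
  proof (rule sum_mono)
    fix k assume k: "k \<in> {..n}"
    hence mk: "1 \<le> m k" and vk: "0 \<le> v k" using assms by auto
    have "cmod (complex_of_real (v k / real (m k)) * blk_trace m k b) = v k / real (m k) * cmod (blk_trace m k b)"
      using vk by (simp only: norm_mult norm_of_real) simp
    also have "\<dots> \<le> v k / real (m k) * (real (m k) * cstar_norm n m b)"
      using t k vk by (intro mult_left_mono) auto
    also have "\<dots> = v k * cstar_norm n m b" using mk by simp
    finally show "cmod (complex_of_real (v k / real (m k)) * blk_trace m k b) \<le> v k * cstar_norm n m b" .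
  qed
  also have "\<dots> = cstar_norm n m b" using assms(3) by (simp add: sum_distrib_right[symmetric])
  finally show ?thesis .
qed

lemma scale_CXA:
  assumes "\<forall>k\<le>n. 1 \<le> m k" "continuous_on UNIV c"
  shows "(\<lambda>z::'x::metric_space. alg_scale (c z) (alg_one n m)) \<in> CXA n m"
  unfolding CXA_def
proof (intro CollectI conjI allI impI)
  fix x :: 'x show "in_alg n m (alg_scale (c x) (alg_one n m))" by (rule in_alg_scale_one)
next
  fix x :: 'x and e :: real assume "0 < e"
  then obtain d where "d > 0" "\<forall>y. dist y x < d \<longrightarrow> dist (c y) (c x) < e"
    using assms(2) unfolding continuous_on_iff by blast
  thus "\<exists>d>0. \<forall>y. dist y x < d \<longrightarrow> cstar_norm n m (alg_diff (alg_scale (c y) (alg_one n m)) (alg_scale (c x) (alg_one n m))) < e"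
    using assms(1) by (auto simp: diff_scale cstar_scale_one dist_norm)
qed

lemma sup_norm_scale:
  assumes "\<forall>k\<le>n. 1 \<le> m k"
  shows "sup_norm n m (\<lambda>z. alg_scale (g z) (alg_one n m)) = (SUP z. cmod (g z))"
  unfolding sup_norm_def using assms by (simp add: cstar_scale_one)

lemma scale_1: "alg_scale 1 a = a" by (simp add: alg_scale_def)

lemma in_alg_diff: "in_alg n m a \<Longrightarrow> in_alg n m b \<Longrightarrow> in_alg n m (alg_diff a b)"
  by (simp add: in_alg_def alg_diff_def)

lemma in_alg_one: "in_alg n m (alg_one n m)"
  by (auto simp: in_alg_def alg_one_def)

lemma sup_cmod_bdd:
  assumes "compact (UNIV::'x::metric_space set)" "continuous_on UNIV (g :: 'x \<Rightarrow> complex)"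
  shows "bdd_above (range (\<lambda>z. cmod (g z)))"
proof -
  have "compact (g ` UNIV)" by (rule compact_continuous_image[OF assms(2) assms(1)])
  hence "bounded (g ` UNIV)" by (rule compact_imp_bounded)
  then obtain B where "\<forall>w\<in>g ` UNIV. norm w \<le> B" unfolding bounded_iff by blast
  thus ?thesis by (intro bdd_aboveI[where M=B]) auto
qed

lemma sup_cmod_nonneg:
  assumes "compact (UNIV::'x::metric_space set)" "continuous_on UNIV (g :: 'x \<Rightarrow> complex)"
  shows "0 \<le> (SUP z. cmod (g z))"
  by (rule cSUP_upper2[OF sup_cmod_bdd[OF assms], of undefined]) auto

theorem theorem3p7:
  fixes n :: nat and m :: "nat \<Rightarrow> nat" and v :: "nat \<Rightarrow> real"
    and nrm :: "blk \<Rightarrow> real" and M N :: real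
  assumes X_compact: "compact (UNIV :: 'x::metric_space set)"
    and m_pos: "\<forall>k\<le>n. 1 \<le> m k"
    and nrm_norm: "is_alg_norm n m nrm"
    and M_pos: "0 < M" and N_pos: "0 < N"
    and equiv: "\<forall>a. in_alg n m a \<longrightarrow> M * nrm a \<le> cstar_norm n m a \<and> cstar_norm n m a \<le> N * nrm a"
    and v_range: "\<forall>k\<le>n. 0 \<le> v k \<and> v k \<le> 1"
    and v_sum: "(\<Sum>k\<le>n. v k) = 1"
  defines "D \<equiv> diameter (UNIV :: 'x set)"
    and "\<Delta> \<equiv> Delta (tr_v n m v)"
  shows
    "\<forall>x y :: 'x.
       \<comment> \<open>(1) q = C(X)\<close>
       (ereal (M * dist x y) \<le> mk n m (L_CX n m nrm) (\<Delta> x) (\<Delta> y) \<and>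
        mk n m (L_CX n m nrm) (\<Delta> x) (\<Delta> y) \<le> ereal (N * dist x y)) \<and>
       \<comment> \<open>(2) q = C\<close>
       (M * D \<le> 1 \<longrightarrow>
          ereal (M * dist x y) \<le> mk n m (L_C n m nrm) (\<Delta> x) (\<Delta> y) \<and>
          mk n m (L_C n m nrm) (\<Delta> x) (\<Delta> y) \<le> ereal (N * dist x y)) \<and>
       (M * D > 1 \<longrightarrow>
          ereal (dist x y / D) \<le> mk n m (L_C n m nrm) (\<Delta> x) (\<Delta> y) \<and>
          mk n m (L_C n m nrm) (\<Delta> x) (\<Delta> y) \<le> ereal (N * dist x y)) \<and>
       \<comment> \<open>(3) q = mu, for every state mu of C(X,A)\<close>
       (\<forall>\<mu>. is_state n m \<mu> \<longrightarrow>
          (2 * M * D \<le> 1 \<longrightarrow>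
             ereal (M * dist x y) \<le> mk n m (L_mu n m nrm \<mu>) (\<Delta> x) (\<Delta> y) \<and>
             mk n m (L_mu n m nrm \<mu>) (\<Delta> x) (\<Delta> y) \<le> ereal (N * dist x y)) \<and>
          (2 * M * D > 1 \<longrightarrow>
             ereal (dist x y / (2 * D)) \<le> mk n m (L_mu n m nrm \<mu>) (\<Delta> x) (\<Delta> y) \<and>
             mk n m (L_mu n m nrm \<mu>) (\<Delta> x) (\<Delta> y) \<le> ereal (N * dist x y)))"

  apply (intro allI)
  subgoal for x y
proof -
  let ?one = "alg_one n m"
  define A where "A s = (\<lambda>z. alg_scale (complex_of_real (s * dist x z)) ?one)" for s
  have bnd: "bounded (UNIV :: 'x set)" using X_compact by (rule compact_imp_bounded)
  have dD: "dist p q \<le> D" for p q :: 'x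
    unfolding D_def by (rule diameter_bounded_bound[OF bnd]) auto
  have D0: "0 \<le> D" using dD[of x x] by simp
  have nrm_scale: "nrm (alg_scale (complex_of_real r) a) = \<bar>r\<bar> * nrm a" if "in_alg n m a" for r a
    using nrm_norm that unfolding is_alg_norm_def by blast
  have cone: "cstar_norm n m ?one = 1"
    using cstar_scale_one[OF m_pos, of 1] by (simp add: scale_1)
  have none: "M * nrm ?one \<le> 1" using equiv in_alg_one[of n m] cone by auto
  have up: "mk n m L (\<Delta> x) (\<Delta> y) \<le> ereal (N * dist x y)"
    if hL: "\<And>a. L a \<le> 1 \<Longrightarrow> lip nrm a \<le> 1" for L
    unfolding mk_def
  proof (rule SUP_least)
    fix a assume "a \<in> {a \<in> CXA n m. fun_adj a = a \<and> L a \<le> 1}"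
    hence aC: "a \<in> CXA n m" and aL: "lip nrm a \<le> 1" using hL by auto
    have ia: "in_alg n m (alg_diff (a x) (a y))"
      using aC by (intro in_alg_diff) (auto simp: CXA_def)
    show "ereal (cmod (\<Delta> x a - \<Delta> y a)) \<le> ereal (N * dist x y)"
    proof (cases "x = y")
      case True thus ?thesis by simp
    next
      case False
      have "ereal (nrm (alg_diff (a (fst (x,y))) (a (snd (x,y)))) / dist (fst (x,y)) (snd (x,y))) \<le> lip nrm a"
        unfolding lip_def by (rule SUP_upper) (use False in auto)
      hence "ereal (nrm (alg_diff (a x) (a y)) / dist x y) \<le> 1" using aL by (simp del: ereal_less_eq add: order_trans)
      hence "nrm (alg_diff (a x) (a y)) / dist x y \<le> 1" by (simp add: one_ereal_def)
      hence nd: "nrm (alg_diff (a x) (a y)) \<le> dist x y" using False by (simp add: divide_le_eq)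
      have "cmod (\<Delta> x a - \<Delta> y a) = cmod (tr_v n m v (alg_diff (a x) (a y)))"
        by (simp add: \<Delta>_def Delta_def tr_diff)
      also have "\<dots> \<le> cstar_norm n m (alg_diff (a x) (a y))"
        using tr_bound m_pos v_range v_sum by blast
      also have "\<dots> \<le> N * nrm (alg_diff (a x) (a y))" using equiv ia by blast
      also have "\<dots> \<le> N * dist x y" using nd N_pos by simp
      finally show ?thesis by simp
    qed
  qed
  have lipL: "lip nrm a \<le> 1" if "max (lip nrm a) r \<le> 1" for a and r :: ereal
    using that by simp
  have contA: "continuous_on UNIV (\<lambda>z. complex_of_real (s * dist x z))" for s
    by (intro continuous_intros)
  have AC: "A s \<in> CXA n m" for s unfolding A_def by (rule scale_CXA[OF m_pos contA])
  have Aadj: "fun_adj (A s) = A s" for s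
    unfolding A_def fun_adj_def by (simp only: adj_scale_one)
  have lipA: "lip nrm (A s) \<le> 1" if "0 \<le> s" "s \<le> M" for s
    unfolding lip_def
  proof (rule SUP_least)
    fix p :: "'x \<times> 'x" assume "p \<in> {p. fst p \<noteq> snd p}"
    hence dp: "0 < dist (fst p) (snd p)" by simp
    have "nrm (alg_diff (A s (fst p)) (A s (snd p)))
        = \<bar>s * dist x (fst p) - s * dist x (snd p)\<bar> * nrm ?one"
      unfolding A_def diff_scale of_real_diff[symmetric] by (rule nrm_scale[OF in_alg_one])
    also have "\<dots> \<le> s * dist (fst p) (snd p) * nrm ?one"
    proof (rule mult_right_mono)
      have "\<bar>dist x (fst p) - dist x (snd p)\<bar> \<le> dist (fst p) (snd p)"
        by (metis abs_le_iff dist_commute dist_triangle2 diff_le_eq minus_diff_eq add.commute)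
      thus "\<bar>s * dist x (fst p) - s * dist x (snd p)\<bar> \<le> s * dist (fst p) (snd p)"
        using that by (simp add: right_diff_distrib[symmetric] abs_mult mult_left_mono)
      show "0 \<le> nrm ?one" using nrm_norm in_alg_one unfolding is_alg_norm_def by blast
    qed
    also have "\<dots> \<le> dist (fst p) (snd p)"
    proof -
      have "s * nrm ?one \<le> M * nrm ?one"
        using that nrm_norm in_alg_one unfolding is_alg_norm_def by (meson mult_right_mono)
      hence "s * nrm ?one \<le> 1" using none by simp
      thus ?thesis using mult_left_mono[OF \<open>s * nrm ?one \<le> 1\<close>, of "dist (fst p) (snd p)"] dp by (simp add: algebra_simps)
    qed
    finally show "ereal (nrm (alg_diff (A s (fst p)) (A s (snd p))) / dist (fst p) (snd p)) \<le> 1"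
      using dp by (simp add: divide_le_eq)
  qed
  have low: "ereal (s * dist x y) \<le> mk n m L (\<Delta> x) (\<Delta> y)"
    if "0 \<le> s" "L (A s) \<le> 1" for s L
    unfolding mk_def
  proof (rule SUP_upper2)
    show "A s \<in> {a \<in> CXA n m. fun_adj a = a \<and> L a \<le> 1}" using AC Aadj that by auto
    have "\<Delta> x (A s) = 0" "\<Delta> y (A s) = complex_of_real (s * dist x y)"
      unfolding \<Delta>_def Delta_def A_def using tr_scale_one[OF m_pos v_sum] by auto
    thus "ereal (s * dist x y) \<le> ereal (cmod (\<Delta> x (A s) - \<Delta> y (A s)))"
      using that by (simp add: norm_mult)
  qed
  have InfI: "Inf S \<le> u" if "t \<in> S" "t \<le> u" "\<forall>r\<in>S. 0 \<le> r" for S :: "real set" and t u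
    by (rule cInf_lower2[OF that(1) that(2)]) (use that(3) in \<open>auto intro: bdd_belowI\<close>)
  have fdA: "fun_diff (A s) (\<lambda>z. alg_scale (c z) ?one) = (\<lambda>z. alg_scale (complex_of_real (s * dist x z) - c z) ?one)" for s c
    by (simp add: fun_diff_def A_def diff_scale)
  have supA: "sup_norm n m (fun_diff (A s) (\<lambda>z. alg_scale (c z) ?one)) = (SUP z. cmod (complex_of_real (s * dist x z) - c z))" for s c
    unfolding fdA by (rule sup_norm_scale[OF m_pos])
  have LCX: "L_CX n m nrm (A s) \<le> 1" if "0 \<le> s" "s \<le> M" for s
  proof -
    let ?S = "{sup_norm n m (fun_diff (A s) b) | b. b \<in> CX_scalar n m}"
    have h1: "A s \<in> CX_scalar n m" unfolding CX_scalar_def A_def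
      by (rule CollectI, rule exI[of _ "\<lambda>z. complex_of_real (s * dist x z)"]) (simp add: continuous_intros)
    have h2: "sup_norm n m (fun_diff (A s) (A s)) = 0"
      using supA[of s "\<lambda>z. complex_of_real (s * dist x z)"] by (simp add: A_def)
    have "0 \<in> ?S" by (rule CollectI, rule exI[of _ "A s"]) (simp add: h1 h2)
    moreover have "\<forall>r\<in>?S. 0 \<le> r"
    proof
      fix r assume "r \<in> ?S"
      then obtain c where c: "continuous_on UNIV c" and r: "r = sup_norm n m (fun_diff (A s) (\<lambda>z. alg_scale (c z) ?one))"
        unfolding CX_scalar_def by blast
      show "0 \<le> r" unfolding r supA
        by (rule sup_cmod_nonneg[OF X_compact]) (intro continuous_intros c)
    qed
    ultimately have "Inf ?S \<le> 0" by (intro InfI) auto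
    thus ?thesis unfolding L_CX_def using lipA[OF that] by (simp add: zero_ereal_def[symmetric])
  qed
  have LC: "L_C n m nrm (A s) \<le> 1" if "0 \<le> s" "s \<le> M" "s * D \<le> 1" for s
  proof -
    let ?S = "{sup_norm n m (fun_diff (A s) (\<lambda>x. alg_scale c ?one)) | c. True}"
    have g1: "sup_norm n m (fun_diff (A s) (\<lambda>x. alg_scale 0 ?one)) \<in> ?S" by (rule CollectI, rule exI[of _ 0]) simp
    have g2: "sup_norm n m (fun_diff (A s) (\<lambda>x. alg_scale 0 ?one)) \<le> s * D"
      unfolding supA
    proof (rule cSUP_least)
      fix z show "cmod (complex_of_real (s * dist x z) - 0) \<le> s * D"
        using that dD[of x z] by (simp add: norm_mult mult_left_mono)
    qed simp
    have g3: "\<forall>r\<in>?S. 0 \<le> r"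
    proof
      fix r assume "r \<in> ?S"
      then obtain c where r: "r = sup_norm n m (fun_diff (A s) (\<lambda>z. alg_scale c ?one))" by blast
      show "0 \<le> r" unfolding r supA
        by (rule sup_cmod_nonneg[OF X_compact]) (intro continuous_intros)
    qed
    have "Inf ?S \<le> 1" by (rule InfI[OF g1 order_trans[OF g2 that(3)] g3])
    thus ?thesis unfolding L_C_def using lipA[OF that(1,2)] by simp
  qed
  have U1: "mk n m (L_CX n m nrm) (\<Delta> x) (\<Delta> y) \<le> ereal (N * dist x y)"
    by (rule up) (auto simp: L_CX_def)
  have U2: "mk n m (L_C n m nrm) (\<Delta> x) (\<Delta> y) \<le> ereal (N * dist x y)"
    by (rule up) (auto simp: L_C_def)
  have U3: "mk n m (L_mu n m nrm \<mu>) (\<Delta> x) (\<Delta> y) \<le> ereal (N * dist x y)" for \<mu>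
    by (rule up) (auto simp: L_mu_def)
  have L1: "ereal (M * dist x y) \<le> mk n m (L_CX n m nrm) (\<Delta> x) (\<Delta> y)"
    using M_pos by (intro low LCX) auto
  have L2a: "ereal (M * dist x y) \<le> mk n m (L_C n m nrm) (\<Delta> x) (\<Delta> y)" if "M * D \<le> 1"
    using M_pos that by (intro low LC) auto
  have L2b: "ereal (dist x y / D) \<le> mk n m (L_C n m nrm) (\<Delta> x) (\<Delta> y)" if "M * D > 1"
  proof -
    have Dp: "D > 0" using that M_pos D0 by (cases "D = 0") auto
    have "1 / D \<le> M" using that Dp by (simp add: divide_le_eq mult.commute)
    hence "ereal (1 / D * dist x y) \<le> mk n m (L_C n m nrm) (\<Delta> x) (\<Delta> y)"
      using Dp by (intro low LC) auto
    thus ?thesis by simp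
  qed
  have Lmu: "L_mu n m nrm \<mu> (A s) \<le> 1" if st: "is_state n m \<mu>" and hs: "0 \<le> s" "s \<le> M" "s * D \<le> 1" for s \<mu>
  proof -
    have add: "\<mu> (\<lambda>x. alg_add (a x) (b x)) = \<mu> a + \<mu> b" if "a \<in> CXA n m" "b \<in> CXA n m" for a b
      using st that unfolding is_state_def by blast
    have hom: "\<mu> (\<lambda>x. alg_scale c (a x)) = c * \<mu> a" if "a \<in> CXA n m" for a c
      using st that unfolding is_state_def by blast
    have pos: "Im (\<mu> (\<lambda>x. alg_mult n m (alg_adj (b x)) (b x))) = 0 \<and> Re (\<mu> (\<lambda>x. alg_mult n m (alg_adj (b x)) (b x))) \<ge> 0"
      if "b \<in> CXA n m" for b
      using st that unfolding is_state_def by blast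
    have unit: "\<mu> (fun_one n m) = 1" using st unfolding is_state_def by blast
    have sq: "(\<lambda>z. alg_mult n m (alg_adj (alg_scale (complex_of_real (sqrt (f z))) ?one)) (alg_scale (complex_of_real (sqrt (f z))) ?one))
        = (\<lambda>z. alg_scale (complex_of_real (f z)) ?one)" if "\<forall>z. 0 \<le> f z" for f :: "'x \<Rightarrow> real"
    proof -
      have "complex_of_real (sqrt (f z)) * complex_of_real (sqrt (f z)) = complex_of_real (f z)" for z
        using that by (simp flip: of_real_mult)
      thus ?thesis by (simp add: adj_scale_one mult_scale_one)
    qed
    have sqC: "(\<lambda>z. alg_scale (complex_of_real (sqrt (f z))) ?one) \<in> CXA n m" if "continuous_on UNIV f" for f :: "'x \<Rightarrow> real"
      by (rule scale_CXA[OF m_pos]) (intro continuous_intros that)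
    have f1: "\<forall>z. 0 \<le> s * dist x z" using hs by simp
    have f2: "\<forall>z. 0 \<le> s * D - s * dist x z" using hs dD by (simp add: mult_left_mono)
    have P1: "Im (\<mu> (A s)) = 0 \<and> Re (\<mu> (A s)) \<ge> 0"
      using pos[OF sqC[of "\<lambda>z. s * dist x z"]] sq[OF f1] unfolding A_def
      by (simp add: continuous_intros)
    have P2: "Re (\<mu> (\<lambda>z. alg_scale (complex_of_real (s * D - s * dist x z)) ?one)) \<ge> 0"
      using pos[OF sqC[of "\<lambda>z. s * D - s * dist x z"]] sq[OF f2]
      by (simp add: continuous_intros)
    have fo: "(fun_one n m :: 'x \<Rightarrow> blk) = (\<lambda>z. alg_scale 1 ?one)" by (simp add: fun_one_def scale_1)
    have foC: "(fun_one n m :: 'x \<Rightarrow> blk) \<in> CXA n m" unfolding fo by (rule scale_CXA[OF m_pos]) simp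
    have c1: "(\<lambda>z::'x. alg_scale (complex_of_real (s * D)) (fun_one n m z)) \<in> CXA n m"
    proof -
      have "(\<lambda>z::'x. alg_scale (complex_of_real (s * D)) (fun_one n m z)) = (\<lambda>z. alg_scale (complex_of_real (s * D)) ?one)"
        by (simp add: fun_one_def)
      moreover have "(\<lambda>z. alg_scale ((\<lambda>_. complex_of_real (s * D)) z) ?one) \<in> CXA n m"
        by (rule scale_CXA[OF m_pos]) simp
      ultimately show ?thesis by simp
    qed
    have c2: "(\<lambda>z::'x. alg_scale (-1) (A s z)) \<in> CXA n m"
    proof -
      have "(\<lambda>z. alg_scale (-1) (A s z)) = (\<lambda>z. alg_scale (- complex_of_real (s * dist x z)) ?one)"
        by (simp add: A_def alg_scale_def fun_eq_iff)
      thus ?thesis by (simp add: scale_CXA[OF m_pos] continuous_intros)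
    qed
    have eqB: "(\<lambda>z. alg_scale (complex_of_real (s * D - s * dist x z)) ?one)
       = (\<lambda>z. alg_add (alg_scale (complex_of_real (s * D)) (fun_one n m z)) (alg_scale (-1) (A s z)))"
      by (simp add: fun_eq_iff alg_add_def alg_scale_def fun_one_def A_def algebra_simps)
    have "\<mu> (\<lambda>z. alg_scale (complex_of_real (s * D - s * dist x z)) ?one) = complex_of_real (s * D) - \<mu> (A s)"
      unfolding eqB add[OF c1 c2] hom[OF foC] hom[OF AC] unit by simp
    with P2 have t2: "Re (\<mu> (A s)) \<le> s * D" by simp
    define t where "t = Re (\<mu> (A s))"
    have mt: "\<mu> (A s) = complex_of_real t" using P1 unfolding t_def by (simp add: complex_eq_iff)
    have t01: "0 \<le> t" "t \<le> s * D" using P1 t2 unfolding t_def by auto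
    have "sup_norm n m (fun_diff (A s) (\<lambda>x. alg_scale (\<mu> (A s)) ?one)) \<le> 1"
      unfolding supA[of s "\<lambda>z. \<mu> (A s)"]
    proof (rule cSUP_least)
      fix z
      have "cmod (complex_of_real (s * dist x z) - complex_of_real t) = \<bar>s * dist x z - t\<bar>"
        by (metis norm_of_real of_real_diff of_real_mult real_norm_def)
      also have "\<dots> \<le> s * D" using t01 f1[rule_format, of z] f2[rule_format, of z] by (simp add: abs_le_iff)
      finally show "cmod (complex_of_real (s * dist x z) - \<mu> (A s)) \<le> 1" using mt hs by simp
    qed simp
    thus ?thesis unfolding L_mu_def using lipA[OF hs(1,2)] by simp
  qed
  have L3a: "ereal (M * dist x y) \<le> mk n m (L_mu n m nrm \<mu>) (\<Delta> x) (\<Delta> y)"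
    if "is_state n m \<mu>" "2 * M * D \<le> 1" for \<mu>
    using M_pos that D0 by (intro low Lmu) auto
  have L3b: "ereal (dist x y / (2 * D)) \<le> mk n m (L_mu n m nrm \<mu>) (\<Delta> x) (\<Delta> y)"
    if "is_state n m \<mu>" "2 * M * D > 1" for \<mu>
  proof -
    have Dp: "D > 0" using that M_pos D0 by (cases "D = 0") auto
    have "1 / (2 * D) \<le> M" using that Dp by (simp add: divide_le_eq mult.commute mult.left_commute)
    hence "ereal (1 / (2 * D) * dist x y) \<le> mk n m (L_mu n m nrm \<mu>) (\<Delta> x) (\<Delta> y)"
      using Dp that by (intro low Lmu) auto
    thus ?thesis by simp
  qed
  show ?thesis using U1 U2 U3 L1 L2a L2b L3a L3b by blast
qed
  done

end
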